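(* Let $\lambda\in\Lambda^{\bullet}(n,r)$ and $A\in\mathrm{cb}(\lambda)$. Then: (1) there exist indices $1\le i_1,\dots,i_l\le n-1$ with $e_{i_1}e_{i_2}\cdots e_{i_l}\cdot\overline{e_A}=\overline{k_\lambda}$ in $S_\lambda$; (2) for indices $1\le i_1,\dots,i_l\le n-1$, the identity $e_{i_1}e_{i_2}\cdots e_{i_l}\cdot\overline{e_A}=\overline{k_\lambda}$ holds if and only if $\overline{e_A}=f_{i_l}\cdots f_{i_2}f_{i_1}\cdot\overline{k_\lambda}$; (3) if $\overline{e_A}=f_{i_l}\cdots f_{i_1}\cdot\overline{k_\lambda}=f_{j_s}\cdots f_{j_1}\cdot\overline{k_\lambda}$, then the multisets $\{i_1,\dots,i_l\}$ and $\{j_1,\dots,j_s\}$ are equal; in particular $l=s$.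
   Context: Setting: $n,r\ge 0$; $\Lambda(n,r)$, $\Lambda^\bullet(n,r)$, $M_n(r)$, $\mathrm{ro}$, $\mathrm{co}$, $E_{a,b}$, $D_\lambda$ as usual. $\mathbf{S}_0(n,r)=S_0(n,r)\otimes_{\mathbb Z}\mathbb C$ is the complex $0$-Schur algebra (the $q=0$ specialization of the Dipper–James $q$-Schur algebra). It has the Jensen–Su standard basis $\{e_A:A\in M_n(r)\}$ with: - $e_Ae_B=0$ unless $\mathrm{co}(A)=\mathrm{ro}(B)$, in which case $e_Ae_B=e_C$ for a unique $C$. - $k_\lambda:=e_{D_\lambda}$ satisfies $k_\lambda e_A=\delta_{\lambda,\mathrm{ro}(A)}e_A$ and $e_Ak_\lambda=\delta_{\lambda,\mathrm{co}(A)}e_A$. - $e_i=\sum_\lambda e_{D_\lambda-E_{i+1,i+1}+E_{i,i+1}}$ and $f_i=\sum_\lambda e_{D_\lambda-E_{i,i}+E_{i+1,i}}$ for $1\le i\le n-1$ (sums over $\lambda$ giving nonnegative matrices). - If $\mathrm{ro}(A)=\lambda$: $e_ie_A=e_{A+E_{i,p}-E_{i+1,p}}$ when $\lambda_{i+1}>0$, where $p$ is the largest $j$ with $a_{i+1,j}>0$, and $e_ie_A=0$ otherwise. - $f_ie_A=e_{A-E_{i,q}+E_{i+1,q}}$ when $\lambda_i>0$, where $q$ is the smallest $j$ with $a_{i,j}>0$, and $f_ie_A=0$ otherwise. $P_\lambda$: for a strong composition $\alpha=(\alpha_1,\dots,\alpha_s)$ of $n$, cut $\lambda$ into consecutive pieces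 of lengths $\alpha_1,\dots,\alpha_s$. $\alpha\in\max(\lambda)$ if each piece is $(0)$ or has nonzero first and last entries. $A(\alpha;v)$ keeps the columns of $A$ with indices in the $v$-th block and zeroes the others. A matrix is open if $a_{i,j}a_{i',j'}=0$ for all $i<i'$, $j<j'$. $A$ is open on columns w.r.t. $\alpha$ if every $A(\alpha;v)$ is open. $B^{\lambda,\alpha}=\{e_A:\mathrm{co}(A)=\lambda, A\text{ open on columns w.r.t. }\alpha\}$, and $B^\lambda=\{e_A:\mathrm{co}(A)=\lambda\}\setminus\bigcup_{\alpha\in\max(\lambda)\setminus\{(1^n)\}}B^{\lambda,\alpha}$. $P_\lambda=\mathbb C B^\lambda$, with $b\cdot e_A=e_B$ if $be_A=e_B$ in $S_0(n,r)$ and $e_B\in B^\lambda$, and $0$ otherwise, for $b\in\{e_i,f_i,k_\mu\}$. Column block diagonal matrix: $a_{i,j}>0\Rightarrow a_{i',s}=0$ for all $i'\le i$, $s>j$. $\mathrm{cb}(\lambda)$ is the set of such $n\times n$ matrices with $\mathrm{co}(A)=\lambda$, and $\beta^\lambda=\{e_A:A\in\mathrm{cb}(\lambda)\}\subseteq B^\lambda$. The span $N_\lambda$ of $B^\lambda\setminus\beta^\lambda$ is a submodule of $P_\lambda$. Set $S_\lambda=P_\lambda/N_\lambda$, with basis $\overline{e_A}=e_A+N_\lambda$ for $A\in\mathrm{cb}(\lambda)$; note $k_\lambda\in\beta^\lambda$. *)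

theory Defs
  imports Complex_Main "HOL-Library.Multiset"
begin

text \<open>An n x n matrix over nat is a function A :: nat => nat => nat whose
  entries are indexed 1-based by {1..n} x {1..n} and vanish outside.\<close>

type_synonym nmat = "nat \<Rightarrow> nat \<Rightarrow> nat"

definition is_nmat :: "nat \<Rightarrow> nmat \<Rightarrow> bool" where
  "is_nmat n A \<longleftrightarrow> (\<forall>i j. A i j \<noteq> 0 \<longrightarrow> i \<in> {1..n} \<and> j \<in> {1..n})"

definition Lambda :: "nat \<Rightarrow> nat \<Rightarrow> (nat \<Rightarrow> nat) set" where
  "Lambda n r = {lam. (\<forall>i. lam i \<noteq> 0 \<longrightarrow> i \<in> {1..n}) \<and> (\<Sum>i=1..n. lam i) = r}"

definition Lambda_bullet :: "nat \<Rightarrow> nat \<Rightarrow> (nat \<Rightarrow> nat) set" where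
  "Lambda_bullet n r = {lam \<in> Lambda n r. \<forall>i. 1 \<le> i \<and> i < n \<and> lam i = 0 \<longrightarrow> lam (Suc i) = 0}"

definition ro :: "nat \<Rightarrow> nmat \<Rightarrow> nat \<Rightarrow> nat" where
  "ro n A = (\<lambda>i. if i \<in> {1..n} then (\<Sum>j=1..n. A i j) else 0)"

definition co :: "nat \<Rightarrow> nmat \<Rightarrow> nat \<Rightarrow> nat" where
  "co n A = (\<lambda>j. if j \<in> {1..n} then (\<Sum>i=1..n. A i j) else 0)"

definition Dmat :: "(nat \<Rightarrow> nat) \<Rightarrow> nmat" where
  "Dmat lam = (\<lambda>i j. if i = j then lam i else 0)"

definition col_block_diag :: "nmat \<Rightarrow> bool" where
  "col_block_diag A \<longleftrightarrow> (\<forall>i j. 0 < A i j \<longrightarrow> (\<forall>i' s. i' \<le> i \<and> j < s \<longrightarrow> A i' s = 0))"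

definition cb :: "nat \<Rightarrow> (nat \<Rightarrow> nat) \<Rightarrow> nmat set" where
  "cb n lam = {A. is_nmat n A \<and> col_block_diag A \<and> co n A = lam}"

text \<open>Products e_i e_A and f_i e_A in S_0(n,r) (Jensen--Su standard basis):
  Some B means the product equals e_B, None means the product is 0.\<close>
definition e_mult :: "nat \<Rightarrow> nat \<Rightarrow> nmat \<Rightarrow> nmat option" where
  "e_mult n i A =
     (if 0 < ro n A (Suc i) then
        (let p = Max {j \<in> {1..n}. 0 < A (Suc i) j} in
          Some (\<lambda>a b. if a = i \<and> b = p then A a b + 1
                       else if a = Suc i \<and> b = p then A a b - 1 else A a b))
      else None)"

definition f_mult :: "nat \<Rightarrow> nat \<Rightarrow> nmat \<Rightarrow> nmat option" where
  "f_mult n i A =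
     (if 0 < ro n A i then
        (let q = Min {j \<in> {1..n}. 0 < A i j} in
          Some (\<lambda>a b. if a = i \<and> b = q then A a b - 1
                       else if a = Suc i \<and> b = q then A a b + 1 else A a b))
      else None)"

text \<open>The module S_lambda = P_lambda / N_lambda, realised on its basis
  {bar e_A : A in cb(lambda)}: a vector is its coefficient function.
  For a generator b with b e_A = e_B (or 0) in S_0(n,r), the induced action is
  b . bar e_A = bar e_B if B in cb(lambda), and 0 otherwise, extended linearly.\<close>
type_synonym svec = "nmat \<Rightarrow> complex"

definition sbasis :: "nmat \<Rightarrow> svec" where
  "sbasis A = (\<lambda>B. if B = A then 1 else 0)"

definition S_act :: "nat \<Rightarrow> (nat \<Rightarrow> nat) \<Rightarrow> (nmat \<Rightarrow> nmat option) \<Rightarrow> svec \<Rightarrow> svec" where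
  "S_act n lam g v =
     (\<lambda>B. if B \<in> cb n lam then (\<Sum>A\<in>cb n lam. if g A = Some B then v A else 0) else 0)"

text \<open>e_{i_1} e_{i_2} ... e_{i_l} . v  for is = [i_1,...,i_l].\<close>
definition E_word :: "nat \<Rightarrow> (nat \<Rightarrow> nat) \<Rightarrow> nat list \<Rightarrow> svec \<Rightarrow> svec" where
  "E_word n lam is v = foldr (\<lambda>i w. S_act n lam (e_mult n i) w) is v"

text \<open>f_{i_l} ... f_{i_2} f_{i_1} . v  for is = [i_1,...,i_l].\<close>
definition F_word_rev :: "nat \<Rightarrow> (nat \<Rightarrow> nat) \<Rightarrow> nat list \<Rightarrow> svec \<Rightarrow> svec" where
  "F_word_rev n lam is v = foldr (\<lambda>i w. S_act n lam (f_mult n i) w) (rev is) v"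

end

theory Submission
  imports Defs "HOL-Library.FuncSet"
begin

definition mv :: "nmat \<Rightarrow> nat \<Rightarrow> nat \<Rightarrow> nat \<Rightarrow> nmat" where
  "mv X a a' q = (\<lambda>x y. if x = a \<and> y = q then X x y - 1 else if x = a' \<and> y = q then X x y + 1 else X x y)"

lemma mv_int:
  assumes "0 < X a q" "a \<noteq> a'"
  shows "int (mv X a a' q x y) = int (X x y) - (if x = a \<and> y = q then 1 else 0) + (if x = a' \<and> y = q then 1 else 0)"
  using assms by (auto simp: mv_def of_nat_diff)

lemma mv_back:
  assumes "0 < X a q" "a \<noteq> a'"
  shows "mv (mv X a a' q) a' a q = X"
  using assms by (auto simp: mv_def fun_eq_iff)

lemma cb_row_unique:
  assumes "col_block_diag A" "0 < A a j" "0 < A a j'"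
  shows "j = j'"
proof (rule ccontr)
  assume "j \<noteq> j'"
  then have "j < j' \<or> j' < j" by arith
  then show False using assms unfolding col_block_diag_def by (metis le_refl less_irrefl)
qed

lemma cb_order:
  assumes "col_block_diag A" "0 < A a j" "0 < A b s" "j < s"
  shows "a < b"
  using assms unfolding col_block_diag_def by (metis not_less less_irrefl)

lemma nmat_range: "is_nmat n A \<Longrightarrow> 0 < A i j \<Longrightarrow> i \<in> {1..n} \<and> j \<in> {1..n}"
  unfolding is_nmat_def by auto

lemma nat_sum_pos: "finite S \<Longrightarrow> (0 < (\<Sum>x\<in>S. f x::nat)) \<longleftrightarrow> (\<exists>x\<in>S. 0 < f x)"
  by (metis gr_zeroI not_gr_zero sum_eq_0_iff)

lemma ro_pos_iff:
  "0 < ro n X t \<longleftrightarrow> t \<in> {1..n} \<and> (\<exists>j\<in>{1..n}. 0 < X t j)"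
  unfolding ro_def by (auto simp: nat_sum_pos)

lemma co_pos_iff:
  "0 < co n X t \<longleftrightarrow> t \<in> {1..n} \<and> (\<exists>j\<in>{1..n}. 0 < X j t)"
  unfolding co_def by (auto simp: nat_sum_pos)

lemma co_mv:
  assumes "0 < X a q" "a \<noteq> a'" "a \<in> {1..n}" "a' \<in> {1..n}"
  shows "co n (mv X a a' q) = co n X"
proof
  fix t
  show "co n (mv X a a' q) t = co n X t"
  proof (cases "t \<in> {1..n}")
    case True
    have "int (\<Sum>i=1..n. mv X a a' q i t) = (\<Sum>i=1..n. int (mv X a a' q i t))" by simp
    also have "\<dots> = (\<Sum>i=1..n. int (X i t) - (if i = a \<and> t = q then 1 else 0) + (if i = a' \<and> t = q then 1 else 0))"
      using mv_int[of X a q a', OF assms(1,2)] by simp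
    also have "\<dots> = (\<Sum>i=1..n. int (X i t))"
      using assms(3,4) by (cases "t = q") (simp_all add: sum.distrib sum_subtractf)
    also have "\<dots> = int (\<Sum>i=1..n. X i t)" by simp
    finally have "(\<Sum>i=1..n. mv X a a' q i t) = (\<Sum>i=1..n. X i t)" by (simp only: of_nat_eq_iff)
    then show ?thesis using True by (simp add: co_def)
  next
    case False then show ?thesis unfolding co_def by auto
  qed
qed

lemma ro_mv:
  assumes "0 < X a q" "a \<noteq> a'" "q \<in> {1..n}" "a \<in> {1..n}" "a' \<in> {1..n}"
  shows "int (ro n (mv X a a' q) t) = int (ro n X t) - (if t = a then 1 else 0) + (if t = a' then 1 else 0)"
proof (cases "t \<in> {1..n}")
  case True
  have "int (\<Sum>j=1..n. mv X a a' q t j) = (\<Sum>j=1..n. int (mv X a a' q t j))" by simp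
  also have "\<dots> = (\<Sum>j=1..n. int (X t j) - (if t = a \<and> j = q then 1 else 0) + (if t = a' \<and> j = q then 1 else 0))"
    using mv_int[of X a q a', OF assms(1,2)] by simp
  also have "\<dots> = (\<Sum>j=1..n. int (X t j)) - (if t = a then 1 else 0) + (if t = a' then 1 else 0)"
    using assms(3) by (simp add: sum.distrib sum_subtractf)
  also have "\<dots> = int (\<Sum>j=1..n. X t j) - (if t = a then 1 else 0) + (if t = a' then 1 else 0)" by simp
  finally show ?thesis using True by (simp add: ro_def)
next
  case False then show ?thesis using assms by (auto simp: ro_def)
qed

lemma finite_cb: "finite (cb n lam)"
proof -
  let ?S = "{1..n} \<times> {1..n}"
  let ?h = "\<lambda>f::nat\<times>nat\<Rightarrow>nat. \<lambda>i j. if (i,j) \<in> ?S then f (i,j) else 0"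
  have "cb n lam \<subseteq> ?h ` (PiE ?S (\<lambda>p. {0..lam (snd p)}))"
  proof
    fix A assume A: "A \<in> cb n lam"
    define f where "f = restrict (\<lambda>p. A (fst p) (snd p)) ?S"
    have le: "A i j \<le> lam j" if "i \<in> {1..n}" "j \<in> {1..n}" for i j
    proof -
      have "A i j \<le> (\<Sum>i'=1..n. A i' j)" using that by (intro member_le_sum) auto
      also have "\<dots> = co n A j" using that by (simp add: co_def)
      also have "\<dots> = lam j" using A by (simp add: cb_def)
      finally show ?thesis .
    qed
    have mem: "f \<in> PiE ?S (\<lambda>p. {0..lam (snd p)})" using le unfolding f_def by auto
    have eq: "?h f = A"
    proof (intro ext)
      fix i j
      have nm: "is_nmat n A" using A by (simp add: cb_def)
      show "?h f i j = A i j"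
      proof (cases "(i,j) \<in> ?S")
        case True then show ?thesis unfolding f_def by simp
      next
        case False then show ?thesis using nm unfolding is_nmat_def by auto
      qed
    qed
    show "A \<in> ?h ` (PiE ?S (\<lambda>p. {0..lam (snd p)}))" by (rule image_eqI[where f="?h" and x=f, OF eq[symmetric] mem])
  qed
  moreover have "finite (PiE ?S (\<lambda>p. {0..lam (snd p)}))" by (intro finite_PiE) auto
  ultimately show ?thesis by (meson finite_imageI finite_subset)
qed


definition vec_of :: "nmat option \<Rightarrow> svec" where
  "vec_of x = (case x of None \<Rightarrow> (\<lambda>_. 0) | Some B \<Rightarrow> sbasis B)"

definition step :: "nat \<Rightarrow> (nat \<Rightarrow> nat) \<Rightarrow> (nmat \<Rightarrow> nmat option) \<Rightarrow> nmat \<Rightarrow> nmat option" where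
  "step n lam g A = (if A \<in> cb n lam then (case g A of None \<Rightarrow> None | Some B \<Rightarrow> if B \<in> cb n lam then Some B else None) else None)"

lemma vec_of_inj: "vec_of x = vec_of y \<longleftrightarrow> x = y"
proof
  assume H: "vec_of x = vec_of y"
  show "x = y"
  proof (cases x; cases y)
    fix A B assume "x = Some A" "y = Some B"
    then show ?thesis using fun_cong[OF H, of A] by (auto simp: vec_of_def sbasis_def split: if_splits)
  next
    fix A assume "x = Some A" "y = None"
    then show ?thesis using fun_cong[OF H, of A] by (auto simp: vec_of_def sbasis_def)
  next
    fix A assume "x = None" "y = Some A"
    then show ?thesis using fun_cong[OF H, of A] by (auto simp: vec_of_def sbasis_def)
  qed simp
qed simp

lemma S_act_vec: "S_act n lam g (vec_of x) = vec_of (Option.bind x (step n lam g))"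
proof (cases x)
  case None then show ?thesis by (simp add: S_act_def vec_of_def fun_eq_iff)
next
  case (Some A)
  show ?thesis
  proof
    fix B
    have sumeq: "(\<Sum>A'\<in>cb n lam. if g A' = Some B then vec_of x A' else 0) = (if A \<in> cb n lam \<and> g A = Some B then 1 else 0)"
    proof -
      have "(\<Sum>A'\<in>cb n lam. if g A' = Some B then vec_of x A' else 0) = (\<Sum>A'\<in>cb n lam. if A' = A then (if g A = Some B then 1 else 0) else 0)"
        by (rule sum.cong) (auto simp: sbasis_def vec_of_def Some)
      also have "\<dots> = (if A \<in> cb n lam \<and> g A = Some B then 1 else 0)"
        using finite_cb by (simp add: sum.delta)
      finally show ?thesis .
    qed
    have L: "S_act n lam g (vec_of x) B = (if B \<in> cb n lam \<and> A \<in> cb n lam \<and> g A = Some B then 1 else 0)"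
      unfolding S_act_def sumeq by simp
    have R: "vec_of (Option.bind x (step n lam g)) B = (if B \<in> cb n lam \<and> A \<in> cb n lam \<and> g A = Some B then 1 else 0)"
      using Some by (auto simp: vec_of_def step_def sbasis_def split: option.splits)
    show "S_act n lam g (vec_of x) B = vec_of (Option.bind x (step n lam g)) B"
      using L R by simp
  qed
qed

fun Ew :: "nat \<Rightarrow> (nat \<Rightarrow> nat) \<Rightarrow> nat list \<Rightarrow> nmat \<Rightarrow> nmat option" where
  "Ew n lam [] A = Some A"
| "Ew n lam (i # xs) A = Option.bind (Ew n lam xs A) (step n lam (e_mult n i))"

fun Fw :: "nat \<Rightarrow> (nat \<Rightarrow> nat) \<Rightarrow> nat list \<Rightarrow> nmat \<Rightarrow> nmat option" where
  "Fw n lam [] A = Some A"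
| "Fw n lam (i # xs) A = Option.bind (step n lam (f_mult n i) A) (Fw n lam xs)"

lemma E_word_vec: "E_word n lam xs (vec_of x) = vec_of (Option.bind x (Ew n lam xs))"
proof (induction xs)
  case Nil then show ?case by (cases x) (simp_all add: E_word_def)
next
  case (Cons i xs)
  have "E_word n lam (i#xs) (vec_of x) = S_act n lam (e_mult n i) (E_word n lam xs (vec_of x))"
    by (simp add: E_word_def)
  also have "\<dots> = vec_of (Option.bind x (Ew n lam (i#xs)))"
    using Cons by (cases x) (simp_all add: S_act_vec)
  finally show ?case .
qed

lemma F_word_vec: "F_word_rev n lam xs (vec_of x) = vec_of (Option.bind x (Fw n lam xs))"
proof (induction xs arbitrary: x)
  case Nil then show ?case by (cases x) (simp_all add: F_word_rev_def)
next
  case (Cons i xs)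
  have "F_word_rev n lam (i#xs) (vec_of x) = F_word_rev n lam xs (S_act n lam (f_mult n i) (vec_of x))"
    by (simp add: F_word_rev_def)
  also have "\<dots> = vec_of (Option.bind x (Fw n lam (i#xs)))"
    using Cons by (cases x) (simp_all add: S_act_vec)
  finally show ?case .
qed

lemma Ew_append: "Ew n lam (xs @ ys) A = Option.bind (Ew n lam ys A) (Ew n lam xs)"
proof (induction xs)
  case Nil then show ?case by (cases "Ew n lam ys A") simp_all
next
  case (Cons a xs) then show ?case by (cases "Ew n lam ys A") simp_all
qed

lemma row_set:
  assumes "A \<in> cb n lam" "0 < A a q"
  shows "{j\<in>{1..n}. 0 < A a j} = {q}"
proof -
  have nm: "is_nmat n A" and cbd: "col_block_diag A" using assms(1) by (auto simp: cb_def)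
  have q: "q \<in> {1..n}" using nmat_range[OF nm assms(2)] by simp
  show ?thesis
  proof
    show "{j\<in>{1..n}. 0 < A a j} \<subseteq> {q}" using cb_row_unique[OF cbd _ assms(2)] by blast
    show "{q} \<subseteq> {j\<in>{1..n}. 0 < A a j}" using q assms(2) by simp
  qed
qed

lemma stepE_Some:
  assumes "step n lam (e_mult n i) A = Some B"
  shows "A \<in> cb n lam \<and> B \<in> cb n lam \<and> (\<exists>p. 0 < A (Suc i) p \<and> B = mv A (Suc i) i p)"
proof -
  have A: "A \<in> cb n lam" and B: "B \<in> cb n lam" and e: "e_mult n i A = Some B"
    using assms by (auto simp: step_def split: if_splits option.splits)
  have "0 < ro n A (Suc i)" using e by (simp add: e_mult_def split: if_splits)
  then obtain p where p: "p \<in> {1..n}" "0 < A (Suc i) p" by (auto simp: ro_pos_iff)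
  have Mx: "Max {j\<in>{1..n}. 0 < A (Suc i) j} = p" using row_set[OF A p(2)] by simp
  have "e_mult n i A = Some (mv A (Suc i) i p)" using \<open>0 < ro n A (Suc i)\<close>
    unfolding e_mult_def Let_def Mx by (auto simp: mv_def fun_eq_iff)
  then have "B = mv A (Suc i) i p" using e by simp
  then show ?thesis using A B p by blast
qed

lemma stepF_Some:
  assumes "step n lam (f_mult n i) A = Some B"
  shows "A \<in> cb n lam \<and> B \<in> cb n lam \<and> (\<exists>q. 0 < A i q \<and> B = mv A i (Suc i) q)"
proof -
  have A: "A \<in> cb n lam" and B: "B \<in> cb n lam" and e: "f_mult n i A = Some B"
    using assms by (auto simp: step_def split: if_splits option.splits)
  have "0 < ro n A i" using e by (simp add: f_mult_def split: if_splits)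
  then obtain p where p: "p \<in> {1..n}" "0 < A i p" by (auto simp: ro_pos_iff)
  have Mx: "Min {j\<in>{1..n}. 0 < A i j} = p" using row_set[OF A p(2)] by simp
  have "f_mult n i A = Some (mv A i (Suc i) p)" using \<open>0 < ro n A i\<close>
    unfolding f_mult_def Let_def Mx by (auto simp: mv_def fun_eq_iff)
  then have "B = mv A i (Suc i) p" using e by simp
  then show ?thesis using A B p by blast
qed

lemma stepE_intro:
  assumes A: "A \<in> cb n lam" and p: "0 < A (Suc i) p" and B: "mv A (Suc i) i p \<in> cb n lam"
  shows "step n lam (e_mult n i) A = Some (mv A (Suc i) i p)"
proof -
  have r: "0 < ro n A (Suc i)" using nmat_range[of n A "Suc i" p] A p by (auto simp: ro_pos_iff cb_def)
  have Mx: "Max {j\<in>{1..n}. 0 < A (Suc i) j} = p" using row_set[OF A p] by simp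
  have "e_mult n i A = Some (mv A (Suc i) i p)" using r
    unfolding e_mult_def Let_def Mx by (auto simp: mv_def fun_eq_iff)
  then show ?thesis using A B by (simp add: step_def)
qed

lemma stepF_intro:
  assumes A: "A \<in> cb n lam" and p: "0 < A i p" and B: "mv A i (Suc i) p \<in> cb n lam"
  shows "step n lam (f_mult n i) A = Some (mv A i (Suc i) p)"
proof -
  have r: "0 < ro n A i" using nmat_range[of n A i p] A p by (auto simp: ro_pos_iff cb_def)
  have Mx: "Min {j\<in>{1..n}. 0 < A i j} = p" using row_set[OF A p] by simp
  have "f_mult n i A = Some (mv A i (Suc i) p)" using r
    unfolding f_mult_def Let_def Mx by (auto simp: mv_def fun_eq_iff)
  then show ?thesis using A B by (simp add: step_def)
qed

lemma stepEF: "step n lam (e_mult n i) C = Some D \<longleftrightarrow> step n lam (f_mult n i) D = Some C"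
proof
  assume "step n lam (e_mult n i) C = Some D"
  from stepE_Some[OF this] obtain p where C: "C \<in> cb n lam" and D: "D \<in> cb n lam"
    and p: "0 < C (Suc i) p" and Dd: "D = mv C (Suc i) i p" by blast
  have "0 < D i p" using Dd by (simp add: mv_def)
  moreover have "mv D i (Suc i) p = C" using Dd mv_back[of C "Suc i" p i, OF p] by simp
  ultimately show "step n lam (f_mult n i) D = Some C" using stepF_intro[OF D, of i p] C by simp
next
  assume "step n lam (f_mult n i) D = Some C"
  from stepF_Some[OF this] obtain p where D: "D \<in> cb n lam" and C: "C \<in> cb n lam"
    and p: "0 < D i p" and Cd: "C = mv D i (Suc i) p" by blast
  have "0 < C (Suc i) p" using Cd by (simp add: mv_def)
  moreover have "mv C (Suc i) i p = D" using Cd mv_back[of D i p "Suc i", OF p] by simp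
  ultimately show "step n lam (e_mult n i) C = Some D" using stepE_intro[OF C, of i p] D by simp
qed

lemma Ew_Fw: "Ew n lam xs A = Some D \<longleftrightarrow> Fw n lam xs D = Some A"
proof (induction xs arbitrary: D)
  case Nil then show ?case by auto
next
  case (Cons i xs)
  have "Ew n lam (i # xs) A = Some D \<longleftrightarrow> (\<exists>C. Ew n lam xs A = Some C \<and> step n lam (e_mult n i) C = Some D)"
    by (simp add: bind_eq_Some_conv)
  also have "\<dots> \<longleftrightarrow> (\<exists>C. Fw n lam xs C = Some A \<and> step n lam (f_mult n i) D = Some C)"
    using Cons.IH stepEF by blast
  also have "\<dots> \<longleftrightarrow> Fw n lam (i # xs) D = Some A"
    by (simp add: bind_eq_Some_conv) blast
  finally show ?case .
qed


lemma ro_step_F: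
  assumes "step n lam (f_mult n i) X = Some Y"
  shows "int (ro n Y t) = int (ro n X t) - (if t = i then 1 else 0) + (if t = Suc i then 1 else 0)"
proof -
  from stepF_Some[OF assms] obtain q where X: "X \<in> cb n lam" and Y: "Y \<in> cb n lam"
    and q: "0 < X i q" and Yd: "Y = mv X i (Suc i) q" by blast
  have r1: "i \<in> {1..n}" "q \<in> {1..n}" using nmat_range[of n X i q] X q by (auto simp: cb_def)
  have "0 < Y (Suc i) q" using Yd by (simp add: mv_def)
  then have r2: "Suc i \<in> {1..n}" using nmat_range[of n Y "Suc i" q] Y by (auto simp: cb_def)
  show ?thesis using ro_mv[of X i q "Suc i" n t, OF q _ r1(2) r1(1) r2] Yd by simp
qed

lemma Fw_count:
  "Fw n lam xs X = Some A \<Longrightarrow>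
    int (ro n A (Suc s)) = int (ro n X (Suc s)) - int (count (mset xs) (Suc s)) + int (count (mset xs) s)"
proof (induction xs arbitrary: X)
  case Nil then show ?case by simp
next
  case (Cons i xs)
  from Cons.prems obtain Y where Y: "step n lam (f_mult n i) X = Some Y" and F: "Fw n lam xs Y = Some A"
    by (auto simp: bind_eq_Some_conv)
  have IH: "int (ro n A (Suc s)) = int (ro n Y (Suc s)) - int (count (mset xs) (Suc s)) + int (count (mset xs) s)"
    using Cons.IH[OF F] .
  have "int (ro n Y (Suc s)) = int (ro n X (Suc s)) - (if Suc s = i then 1 else 0) + (if Suc s = Suc i then 1 else 0)"
    using ro_step_F[OF Y] .
  then show ?case using IH by auto
qed

lemma counts_eq:
  assumes "0 \<notin> set xs" "0 \<notin> set ys" "Fw n lam xs D = Some A" "Fw n lam ys D = Some A"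
  shows "mset xs = mset ys"
proof (rule multiset_eqI)
  fix s
  show "count (mset xs) s = count (mset ys) s"
  proof (induction s)
    case 0 then show ?case using assms(1,2) by (metis count_mset_0_iff)
  next
    case (Suc s)
    have "int (ro n A (Suc s)) = int (ro n D (Suc s)) - int (count (mset xs) (Suc s)) + int (count (mset xs) s)"
      using Fw_count[OF assms(3)] .
    moreover have "int (ro n A (Suc s)) = int (ro n D (Suc s)) - int (count (mset ys) (Suc s)) + int (count (mset ys) s)"
      using Fw_count[OF assms(4)] .
    ultimately show ?case using Suc by linarith
  qed
qed

lemma bullet_down:
  assumes "lam \<in> Lambda_bullet n r" "1 \<le> a" "a \<le> c" "0 < lam c"
  shows "0 < lam a"
proof (rule ccontr)
  assume "\<not> 0 < lam a"
  hence z: "lam a = 0" by simp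
  have "lam (a + k) = 0" for k
  proof (induction k)
    case 0 show ?case using z by simp
  next
    case (Suc k)
    show ?case
    proof (cases "a + k < n")
      case True then show ?thesis using assms(1,2) Suc unfolding Lambda_bullet_def by auto
    next
      case False then show ?thesis using assms(1) unfolding Lambda_bullet_def Lambda_def by auto
    qed
  qed
  then have "lam c = 0" using assms(3) by (metis le_add_diff_inverse)
  with assms(4) show False by simp
qed

lemma mv_cb:
  assumes A: "A \<in> cb n lam" and pos: "0 < A (Suc i) p" and row: "\<And>c. 0 < A i c \<Longrightarrow> c = p" and i1: "1 \<le> i"
  shows "mv A (Suc i) i p \<in> cb n lam"
proof -
  have nm: "is_nmat n A" and cbd: "col_block_diag A" and co: "co n A = lam" using A by (auto simp: cb_def)
  have r: "Suc i \<in> {1..n}" "p \<in> {1..n}" using nmat_range[OF nm pos] by auto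
  have ri: "i \<in> {1..n}" using r i1 by auto
  let ?B = "mv A (Suc i) i p"
  have "is_nmat n ?B"
    unfolding is_nmat_def
  proof (intro allI impI)
    fix x y assume "?B x y \<noteq> 0"
    then show "x \<in> {1..n} \<and> y \<in> {1..n}"
      using ri r nm unfolding is_nmat_def mv_def by (auto split: if_splits)
  qed
  moreover have "co n ?B = lam" using co_mv[of A "Suc i" p i n, OF pos _ r(1) ri] co by simp
  moreover have "col_block_diag ?B"
    unfolding col_block_diag_def
  proof (intro allI impI)
    fix x y x' s
    assume Bp: "0 < ?B x y" and xs: "x' \<le> x \<and> y < s"
    show "?B x' s = 0"
    proof (cases "x = i \<and> y = p")
      case True
      then have "s \<noteq> p" using xs by simp
      then have "?B x' s = A x' s" by (simp add: mv_def)
      moreover have "A x' s = 0" using cbd pos xs True unfolding col_block_diag_def by simp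
      ultimately show ?thesis by simp
    next
      case False
      then have Axy: "0 < A x y" using Bp by (auto simp: mv_def split: if_splits)
      have z: "A x' s = 0" using cbd Axy xs unfolding col_block_diag_def by blast
      have "\<not> (x' = i \<and> s = p)"
      proof
        assume e: "x' = i \<and> s = p"
        show False
        proof (cases "x = i")
          case True
          then have "y = p" using row Axy by simp
          then show False using xs e by simp
        next
          case False
          then have "Suc i \<le> x" using xs e by simp
          then have "A (Suc i) p = 0" using cbd Axy xs e unfolding col_block_diag_def by blast
          then show False using pos by simp
        qed
      qed
      then show ?thesis using z by (auto simp: mv_def)
    qed
  qed
  ultimately show ?thesis by (simp add: cb_def)
qed


lemma exists_up:
  assumes lam: "lam \<in> Lambda_bullet n r" and A: "A \<in> cb n lam" and ne: "A \<noteq> Dmat lam"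
  shows "\<exists>i p. 1 \<le> i \<and> i < n \<and> 0 < A (Suc i) p \<and> mv A (Suc i) i p \<in> cb n lam"
proof -
  have nm: "is_nmat n A" and cbd: "col_block_diag A" and co: "co n A = lam" using A by (auto simp: cb_def)
  have "\<exists>a c. 0 < A a c \<and> a \<noteq> c"
  proof (rule ccontr)
    assume H: "\<not> (\<exists>a c. 0 < A a c \<and> a \<noteq> c)"
    have "A = Dmat lam"
    proof (intro ext)
      fix x y
      show "A x y = Dmat lam x y"
      proof (cases "x = y")
        case False then show ?thesis using H by (auto simp: Dmat_def)
      next
        case True
        show ?thesis
        proof (cases "y \<in> {1..n}")
          case yin: True
          have "lam y = co n A y" using co by simp
          also have "\<dots> = (\<Sum>i=1..n. A i y)" using yin by (simp add: co_def)
          also have "\<dots> = (\<Sum>i=1..n. if i = y then A y y else 0)"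
            by (rule sum.cong) (use H in auto)
          also have "\<dots> = A y y" using yin by simp
          finally show ?thesis using True by (simp add: Dmat_def)
        next
          case False
          have "A y y = 0" using nm False unfolding is_nmat_def by auto
          moreover have "lam y = 0" using lam False unfolding Lambda_bullet_def Lambda_def by auto
          ultimately show ?thesis using True by (simp add: Dmat_def)
        qed
      qed
    qed
    with ne show False by simp
  qed
  then have "\<exists>a. (\<exists>c. 0 < A a c \<and> a \<noteq> c) \<and> (\<forall>b<a. \<not> (\<exists>c. 0 < A b c \<and> b \<noteq> c))"
    by (rule exists_least_iff[THEN iffD1])
  then obtain a0 c0 where ac: "0 < A a0 c0" "a0 \<noteq> c0" and mn: "\<And>b c. b < a0 \<Longrightarrow> 0 < A b c \<Longrightarrow> c = b"
    by blast
  have rng: "a0 \<in> {1..n}" "c0 \<in> {1..n}" using nmat_range[OF nm ac(1)] by auto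
  show ?thesis
  proof (cases "a0 < c0")
    case True
    have "0 < co n A c0" using rng ac(1) by (auto simp: co_pos_iff)
    then have "0 < lam c0" using co by simp
    moreover have "1 \<le> a0" "a0 \<le> c0" using rng True by auto
    ultimately have "0 < lam a0" using bullet_down[OF lam] by blast
    then have "0 < co n A a0" using co by simp
    then obtain b where b: "b \<in> {1..n}" "0 < A b a0" by (auto simp: co_pos_iff)
    have "b < a0" using cb_order[OF cbd b(2) ac(1) True] .
    then have "a0 = b" using mn b(2) by blast
    then show ?thesis using \<open>b < a0\<close> by simp
  next
    case False
    then have lt: "c0 < a0" using ac(2) by simp
    define i where "i = a0 - 1"
    have ai: "a0 = Suc i" using lt i_def by simp
    have i1: "1 \<le> i" using lt rng ai by auto
    have iN: "i < n" using rng ai by auto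
    have row: "c = c0" if "0 < A i c" for c
    proof -
      have ci: "c = i" using mn[OF _ that] ai by simp
      have "\<not> c0 < i"
      proof
        assume "c0 < i"
        then have "a0 < i" using cb_order[OF cbd ac(1) _ ] that ci by simp
        then show False using ai by simp
      qed
      then show ?thesis using ci lt ai by simp
    qed
    have pos: "0 < A (Suc i) c0" using ac(1) ai by simp
    show ?thesis using mv_cb[OF A pos row i1] i1 iN pos by blast
  qed
qed

definition mu :: "nat \<Rightarrow> nmat \<Rightarrow> nat" where
  "mu n A = (\<Sum>t=1..n. t * ro n A t)"

lemma mu_dec:
  assumes A: "A \<in> cb n lam" and pos: "0 < A (Suc i) p" and i1: "1 \<le> i"
  shows "mu n (mv A (Suc i) i p) < mu n A"
proof -
  have nm: "is_nmat n A" using A by (simp add: cb_def)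
  have r: "Suc i \<in> {1..n}" "p \<in> {1..n}" using nmat_range[OF nm pos] by auto
  have ri: "i \<in> {1..n}" using r i1 by auto
  have "int (mu n (mv A (Suc i) i p)) = (\<Sum>t=1..n. int t * int (ro n (mv A (Suc i) i p) t))"
    by (simp add: mu_def)
  also have "\<dots> = (\<Sum>t=1..n. int t * int (ro n A t) - (if t = Suc i then int t else 0) + (if t = i then int t else 0))"
  proof (rule sum.cong)
    fix t assume "t \<in> {1..n}"
    have "int (ro n (mv A (Suc i) i p) t) = int (ro n A t) - (if t = Suc i then 1 else 0) + (if t = i then 1 else 0)"
      using ro_mv[of A "Suc i" p i n t, OF pos _ r(2) r(1) ri] by simp
    then show "int t * int (ro n (mv A (Suc i) i p) t) = int t * int (ro n A t) - (if t = Suc i then int t else 0) + (if t = i then int t else 0)"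
      by (simp only:) (cases "t = Suc i"; cases "t = i"; simp add: right_diff_distrib distrib_left)
  qed simp
  also have "\<dots> = (\<Sum>t=1..n. int t * int (ro n A t)) - int (Suc i) + int i"
    using r ri by (simp add: sum.distrib sum_subtractf)
  also have "\<dots> = int (mu n A) - 1" by (simp add: mu_def)
  finally show ?thesis by linarith
qed

lemma reach:
  assumes lam: "lam \<in> Lambda_bullet n r"
  shows "A \<in> cb n lam \<Longrightarrow> \<exists>xs. set xs \<subseteq> {1..<n} \<and> Ew n lam xs A = Some (Dmat lam)"
proof (induction "mu n A" arbitrary: A rule: less_induct)
  case less
  show ?case
  proof (cases "A = Dmat lam")
    case True then show ?thesis by (intro exI[of _ "[]"]) simp
  next
    case False
    from exists_up[OF lam less.prems False] obtain i p where
      i: "1 \<le> i" "i < n" and pos: "0 < A (Suc i) p" and B: "mv A (Suc i) i p \<in> cb n lam" by blast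
    have st: "step n lam (e_mult n i) A = Some (mv A (Suc i) i p)"
      using stepE_intro[OF less.prems pos B] .
    have "mu n (mv A (Suc i) i p) < mu n A" using mu_dec[OF less.prems pos i(1)] .
    from less.hyps[OF this B] obtain ys where ys: "set ys \<subseteq> {1..<n}" "Ew n lam ys (mv A (Suc i) i p) = Some (Dmat lam)"
      by blast
    have "Ew n lam (ys @ [i]) A = Some (Dmat lam)" using ys(2) st by (simp add: Ew_append)
    moreover have "set (ys @ [i]) \<subseteq> {1..<n}" using ys(1) i by auto
    ultimately show ?thesis by blast
  qed
qed

theorem mainTheorem3:
  fixes n r :: nat and lam :: "nat \<Rightarrow> nat" and A :: nmat
  assumes "lam \<in> Lambda_bullet n r" and "A \<in> cb n lam"
  shows "(\<exists>is. set is \<subseteq> {1..<n} \<and>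
            E_word n lam is (sbasis A) = sbasis (Dmat lam))
       \<and> (\<forall>is. set is \<subseteq> {1..<n} \<longrightarrow>
            (E_word n lam is (sbasis A) = sbasis (Dmat lam)
             \<longleftrightarrow> sbasis A = F_word_rev n lam is (sbasis (Dmat lam))))
       \<and> (\<forall>is js. set is \<subseteq> {1..<n} \<and> set js \<subseteq> {1..<n}
            \<and> sbasis A = F_word_rev n lam is (sbasis (Dmat lam))
            \<and> sbasis A = F_word_rev n lam js (sbasis (Dmat lam))
            \<longrightarrow> mset is = mset js \<and> length is = length js)"
proof -
  have sb: "\<And>B. sbasis B = vec_of (Some B)" by (simp add: vec_of_def)
  have EW: "\<And>xs. E_word n lam xs (vec_of (Some A)) = vec_of (Ew n lam xs A)"
    using E_word_vec[of n lam _ "Some A"] by simp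
  have FW: "\<And>xs. F_word_rev n lam xs (vec_of (Some (Dmat lam))) = vec_of (Fw n lam xs (Dmat lam))"
    using F_word_vec[of n lam _ "Some (Dmat lam)"] by simp
  have P1: "\<exists>xs. set xs \<subseteq> {1..<n} \<and> E_word n lam xs (sbasis A) = sbasis (Dmat lam)"
  proof -
    obtain xs where xs: "set xs \<subseteq> {1..<n}" "Ew n lam xs A = Some (Dmat lam)" using reach[OF assms] by blast
    have "E_word n lam xs (sbasis A) = sbasis (Dmat lam)" by (simp add: EW xs(2) sb)
    then show ?thesis using xs(1) by blast
  qed
  have P2: "\<forall>xs. set xs \<subseteq> {1..<n} \<longrightarrow>
            (E_word n lam xs (sbasis A) = sbasis (Dmat lam)
             \<longleftrightarrow> sbasis A = F_word_rev n lam xs (sbasis (Dmat lam)))"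
    by (auto simp: EW FW sb vec_of_inj Ew_Fw)
  have P3: "\<forall>xs ys. set xs \<subseteq> {1..<n} \<and> set ys \<subseteq> {1..<n}
            \<and> sbasis A = F_word_rev n lam xs (sbasis (Dmat lam))
            \<and> sbasis A = F_word_rev n lam ys (sbasis (Dmat lam))
            \<longrightarrow> mset xs = mset ys \<and> length xs = length ys"
  proof (intro allI impI)
    fix xs ys
    assume H: "set xs \<subseteq> {1..<n} \<and> set ys \<subseteq> {1..<n}
            \<and> sbasis A = F_word_rev n lam xs (sbasis (Dmat lam))
            \<and> sbasis A = F_word_rev n lam ys (sbasis (Dmat lam))"
    then have "Fw n lam xs (Dmat lam) = Some A" "Fw n lam ys (Dmat lam) = Some A"
      by (auto simp: FW sb vec_of_inj)
    moreover have "0 \<notin> set xs" "0 \<notin> set ys" using H by auto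
    ultimately have "mset xs = mset ys" using counts_eq by blast
    then show "mset xs = mset ys \<and> length xs = length ys" by (metis size_mset)
  qed
  show ?thesis using P1 P2 P3 by blast
qed

end
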